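(* Let $S$ be as in the context. For every path $p$ from the root to a leaf in $\mathcal{T}(S)$ there is exactly one node $\phi$ on $p$ such that (1) $\phi$ has a unique Weiner link, (2) every ancestor of $\phi$ on $p$ has multiple Weiner links, and (3) every node in the subtree rooted at $\phi$ has a unique Weiner link.
   Context: $\Sigma$ is a finite totally ordered alphabet containing a symbol $\$$ smaller than every other symbol. $S$ is a string of length $n\ge 2$ over $\Sigma$ whose last character is $\$$ and in which $\$$ occurs nowhere else. The rotations of $S$ are the $n$ strings $S[i..n]S[1..i-1]$, $i\in[1,n]$. The rotation-trie $\mathcal{T}(S)$ is the trie of the set of rotations of $S$ (a rooted tree with single-character edge labels, children of a node having distinct labels, ordered by increasing label). The label $l(\phi)$ of a node is the concatenation of edge labels on the root-to-$\phi$ path; leaves are the $n$ nodes with $|l(\phi)|=n$. A triple $(\phi,\varphi,c)$ with $\phi,\varphi$ nodes and $c\in\Sigma$ is a Weiner link of $\phi$ if $l(\varphi)=c\,l(\phi)$, or $|l(\phi)|=n$ and $l(\varphi)=c\,l(\phi)[1..n-1]$. A node $\phi$ has a unique Weiner link if all of its Weiner links have the same target node $\varphi$ (every node has at least one Weiner link); otherwise $\phi$ has multiple Weiner links. *)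

theory Defs
  imports Main "HOL-Library.Sublist"
begin

text \<open>Strings are lists; positions are 0-indexed. The rotation S[i..n]S[1..i-1]
  (1-indexed, i in [1,n]) is drop i S @ take i S for i < n (0-indexed).\<close>

definition rotations :: "'a list \<Rightarrow> 'a list set" where
  "rotations S = {drop i S @ take i S | i. i < length S}"

text \<open>Nodes of the rotation trie are identified with their labels: the prefixes
  of rotations (the root is the empty string, leaves are the full rotations).\<close>

definition trie_nodes :: "'a list \<Rightarrow> 'a list set" where
  "trie_nodes S = {x. \<exists>r \<in> rotations S. prefix x r}"

definition weiner_link :: "'a set \<Rightarrow> 'a list \<Rightarrow> 'a list \<Rightarrow> 'a list \<Rightarrow> 'a \<Rightarrow> bool" where
  "weiner_link \<Sigma> S x y c \<longleftrightarrow>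
     x \<in> trie_nodes S \<and> y \<in> trie_nodes S \<and> c \<in> \<Sigma> \<and>
     (y = c # x \<or> (length x = length S \<and> y = c # butlast x))"

definition unique_weiner_link :: "'a set \<Rightarrow> 'a list \<Rightarrow> 'a list \<Rightarrow> bool" where
  "unique_weiner_link \<Sigma> S x \<longleftrightarrow>
     (\<forall>y c y' c'. weiner_link \<Sigma> S x y c \<and> weiner_link \<Sigma> S x y' c' \<longrightarrow> y = y')"

definition multiple_weiner_links :: "'a set \<Rightarrow> 'a list \<Rightarrow> 'a list \<Rightarrow> bool" where
  "multiple_weiner_links \<Sigma> S x \<longleftrightarrow> \<not> unique_weiner_link \<Sigma> S x"

end

theory Submission
  imports Defs "HOL-Library.Multiset"
begin

lemma rot_len: "r \<in> rotations S \<Longrightarrow> length r = length S"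
  unfolding rotations_def by auto

lemma rot_mset: "r \<in> rotations S \<Longrightarrow> mset r = mset S"
  unfolding rotations_def
  by (auto, metis append_take_drop_id mset_append union_commute)

lemma node_len: "x \<in> trie_nodes S \<Longrightarrow> length x \<le> length S"
  unfolding trie_nodes_def using rot_len prefix_length_le by fastforce

lemma node_prefix: "x \<in> trie_nodes S \<Longrightarrow> prefix w x \<Longrightarrow> w \<in> trie_nodes S"
  unfolding trie_nodes_def using prefix_order.trans by blast

lemma node_full: "x \<in> trie_nodes S \<Longrightarrow> length x = length S \<Longrightarrow> x \<in> rotations S"
proof -
  assume a: "x \<in> trie_nodes S" "length x = length S"
  then obtain r where r: "r \<in> rotations S" "prefix x r" unfolding trie_nodes_def by auto
  then obtain zs where "r = x @ zs" by (auto simp: prefix_def)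
  moreover have "length r = length S" using r rot_len by blast
  ultimately have "zs = []" using a by simp
  then show ?thesis using r \<open>r = x @ zs\<close> by simp
qed

lemma link_target: "weiner_link \<Sigma> S z y c \<Longrightarrow>
   y = (if length z = length S then c # butlast z else c # z)"
  unfolding weiner_link_def using node_len[of y S] by auto

lemma link_down: "weiner_link \<Sigma> S z y c \<Longrightarrow> strict_prefix x z \<Longrightarrow> weiner_link \<Sigma> S x (c#x) c"
proof -
  assume l: "weiner_link \<Sigma> S z y c" and sp: "strict_prefix x z"
  have zn: "z \<in> trie_nodes S" "y \<in> trie_nodes S" "c \<in> \<Sigma>" using l unfolding weiner_link_def by auto
  have xn: "x \<in> trie_nodes S" using zn sp node_prefix prefix_order.less_imp_le by blast
  have "prefix (c#x) y"
  proof (cases "length z = length S")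
    case True
    then have "y = c # butlast z" using link_target[OF l] by simp
    moreover have "prefix x (butlast z)" using sp
      by (auto simp: strict_prefix_def prefix_def butlast_append)
    ultimately show ?thesis by simp
  next
    case False
    then have "y = c # z" using link_target[OF l] by simp
    then show ?thesis using sp by (simp add: prefix_order.less_imp_le)
  qed
  then have "c#x \<in> trie_nodes S" using zn node_prefix by blast
  then show ?thesis using xn zn unfolding weiner_link_def by auto
qed

lemma mono_unique:
  assumes "unique_weiner_link \<Sigma> S x" "prefix x z"
  shows "unique_weiner_link \<Sigma> S z"
proof (cases "x = z")
  case True then show ?thesis using assms by simp
next
  case False
  then have sp: "strict_prefix x z" using assms(2) by (simp add: strict_prefix_def)
  show ?thesis unfolding unique_weiner_link_def
  proof (intro allI impI)
    fix y c y' c' assume "weiner_link \<Sigma> S z y c \<and> weiner_link \<Sigma> S z y' c'"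
    then have l: "weiner_link \<Sigma> S z y c" "weiner_link \<Sigma> S z y' c'" by auto
    have "c # x = c' # x" using assms(1) link_down[OF l(1) sp] link_down[OF l(2) sp]
      unfolding unique_weiner_link_def by blast
    then show "y = y'" using link_target[OF l(1)] link_target[OF l(2)] by simp
  qed
qed

lemma leaf_unique:
  assumes "r \<in> rotations S"
  shows "unique_weiner_link \<Sigma> S r"
  unfolding unique_weiner_link_def
proof (intro allI impI)
  fix y c y' c' assume "weiner_link \<Sigma> S r y c \<and> weiner_link \<Sigma> S r y' c'"
  then have l: "weiner_link \<Sigma> S r y c" "weiner_link \<Sigma> S r y' c'" by auto
  have lr: "length r = length S" using rot_len assms by blast
  have y: "y = c # butlast r" and y': "y' = c' # butlast r"
    using link_target[OF l(1)] link_target[OF l(2)] lr by auto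
  have "y \<in> trie_nodes S" "y' \<in> trie_nodes S" using l unfolding weiner_link_def by auto
  moreover have "length y = length S" "length y' = length S" using y y' lr assms
    by (auto simp: rotations_def)
  ultimately have "mset y = mset S" "mset y' = mset S" using node_full rot_mset by blast+
  then have "add_mset c (mset (butlast r)) = add_mset c' (mset (butlast r))" using y y' by simp
  then have "c = c'" by (auto dest: arg_cong[where f="\<lambda>M. count M c"] split: if_splits)
  then show "y = y'" using y y' by simp
qed

theorem mainTheorem4:
  fixes \<Sigma> :: "'a::linorder set" and dollar :: 'a and S :: "'a list"
  assumes "finite \<Sigma>" and "dollar \<in> \<Sigma>"
    and "\<forall>c\<in>\<Sigma>. c \<noteq> dollar \<longrightarrow> dollar < c"
    and "set S \<subseteq> \<Sigma>" and "length S \<ge> 2"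
    and "last S = dollar" and "dollar \<notin> set (butlast S)"
  shows "\<forall>r \<in> rotations S. \<exists>!x. prefix x r
           \<and> unique_weiner_link \<Sigma> S x
           \<and> (\<forall>y. strict_prefix y x \<longrightarrow> multiple_weiner_links \<Sigma> S y)
           \<and> (\<forall>z \<in> trie_nodes S. prefix x z \<longrightarrow> unique_weiner_link \<Sigma> S z)"
proof
  fix r assume r: "r \<in> rotations S"
  define P where "P k = unique_weiner_link \<Sigma> S (take k r)" for k
  have Pn: "P (length r)" using leaf_unique[OF r] unfolding P_def by simp
  define k where "k = (LEAST k. P k)"
  have Pk: "P k" unfolding k_def using Pn by (rule LeastI)
  have min: "\<And>j. j < k \<Longrightarrow> \<not> P j" unfolding k_def using not_less_Least by blast
  have kle: "k \<le> length r" unfolding k_def using Pn by (rule Least_le)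
  define x where "x = take k r"
  have ex: "prefix x r
           \<and> unique_weiner_link \<Sigma> S x
           \<and> (\<forall>y. strict_prefix y x \<longrightarrow> multiple_weiner_links \<Sigma> S y)
           \<and> (\<forall>z \<in> trie_nodes S. prefix x z \<longrightarrow> unique_weiner_link \<Sigma> S z)"
  proof (intro conjI allI impI ballI)
    show "prefix x r" unfolding x_def by (simp add: take_is_prefix)
    show u: "unique_weiner_link \<Sigma> S x" using Pk unfolding P_def x_def .
    fix y assume "strict_prefix y x"
    moreover have "prefix x r" unfolding x_def by (simp add: take_is_prefix)
    ultimately have "prefix y r" "length y < length x"
      using prefix_order.less_imp_le prefix_order.order_trans prefix_length_less by blast+
    then have "y = take (length y) r" "length y < k"
      unfolding x_def by (auto simp: prefix_def)
    then show "multiple_weiner_links \<Sigma> S y" using min unfolding P_def multiple_weiner_links_def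
      by metis
  next
    fix z assume "z \<in> trie_nodes S" "prefix x z"
    then show "unique_weiner_link \<Sigma> S z" using mono_unique Pk unfolding P_def x_def by blast
  qed
  show "\<exists>!x. prefix x r
           \<and> unique_weiner_link \<Sigma> S x
           \<and> (\<forall>y. strict_prefix y x \<longrightarrow> multiple_weiner_links \<Sigma> S y)
           \<and> (\<forall>z \<in> trie_nodes S. prefix x z \<longrightarrow> unique_weiner_link \<Sigma> S z)"
  proof (rule ex1I[of _ x])
    show "prefix x r
           \<and> unique_weiner_link \<Sigma> S x
           \<and> (\<forall>y. strict_prefix y x \<longrightarrow> multiple_weiner_links \<Sigma> S y)
           \<and> (\<forall>z \<in> trie_nodes S. prefix x z \<longrightarrow> unique_weiner_link \<Sigma> S z)" by (rule ex)
    fix x' assume h: "prefix x' r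
           \<and> unique_weiner_link \<Sigma> S x'
           \<and> (\<forall>y. strict_prefix y x' \<longrightarrow> multiple_weiner_links \<Sigma> S y)
           \<and> (\<forall>z \<in> trie_nodes S. prefix x' z \<longrightarrow> unique_weiner_link \<Sigma> S z)"
    show "x' = x"
    proof (rule ccontr)
      assume ne: "x' \<noteq> x"
      have "prefix x x' \<or> prefix x' x" using h ex prefix_same_cases by blast
      then have "strict_prefix x x' \<or> strict_prefix x' x" using ne by (auto simp: strict_prefix_def)
      then show False using h ex unfolding multiple_weiner_links_def by blast
    qed
  qed
qed

end
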